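(* Let $\mathbf{c}_{0:n}=(c_0,\dots,c_n)$ be a vector of covariance lags of some bounded non-negative measure on $\mathbb{T}$ such that the Toeplitz matrix $T_n=[c_{k-\ell}]_{k,\ell=0}^n$ (with $c_{-k}=\bar c_k$) is singular, and let $\hat{\mathbf{c}}_{0:n}(k)$, $k=1,2,\dots$, be a sequence of vectors of covariance lags (each the first $n+1$ covariances of some bounded non-negative measure on $\mathbb{T}$) with $\hat{\mathbf{c}}_{0:n}(k)\to\mathbf{c}_{0:n}$ as $k\to\infty$. If $\delta$ is a weakly continuous metric on the set $\mathfrak{M}$ of bounded non-negative measures on $\mathbb{T}$, then $\rho_\delta(\mathcal{F}_{\hat{\mathbf{c}}_{0:n}(k)})\to0$ as $k\to\infty$.
   Context: Covariance lags of $d\mu$: $c_k=\frac{1}{2\pi}\int_{-\pi}^{\pi}e^{-ik\theta}d\mu(\theta)$. For $\mathbf{a}=(a_0,\dots,a_n)$, $\mathcal{F}_{\mathbf{a}}=\{d\mu\in\mathfrak{M}:\frac{1}{2\pi}\int_{-\pi}^{\pi}e^{-ik\theta}d\mu(\theta)=a_k,\ k=0,\dots,n\}$. The diameter is $\rho_\delta(\mathcal{F})=\sup\{\delta(d\mu_0,d\mu_1):d\mu_0,d\mu_1\in\mathcal{F}\}$. Weak topology on $\mathfrak{M}$: $d\mu_k\to d\mu$ iff $\int fd\mu_k\to\int fd\mu$ for all real continuous $f$ on $\mathbb{T}$; $\delta$ is weakly continuous if it is continuous on $\mathfrak{M}\times\mathfrak{M}$ for this topology. *)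

theory Defs
  imports "HOL-Analysis.Analysis" "Jordan_Normal_Form.Determinant"
begin

text \<open>The unit circle T is represented as the unit circle in the complex plane,
  via the point z = exp(i theta).\<close>

definition circ_measures :: "complex measure set" where
  "circ_measures = {M. sets M = sets (restrict_space borel (sphere 0 1)) \<and> finite_measure M}"

text \<open>Covariance lag c_k = (1/2pi) int e^{-ik theta} dmu(theta); with z = e^{i theta},
  e^{-ik theta} = (cnj z)^k.\<close>
definition cov_lag :: "complex measure \<Rightarrow> nat \<Rightarrow> complex" where
  "cov_lag M k = (1 / (2 * pi)) * integral\<^sup>L M (\<lambda>z. (cnj z) ^ k)"

definition F_set :: "nat \<Rightarrow> (nat \<Rightarrow> complex) \<Rightarrow> complex measure set" where
  "F_set n a = {M \<in> circ_measures. \<forall>k\<le>n. cov_lag M k = a k}"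

definition diam_delta :: "(complex measure \<Rightarrow> complex measure \<Rightarrow> real) \<Rightarrow> complex measure set \<Rightarrow> real" where
  "diam_delta \<delta> F = Sup {\<delta> M0 M1 | M0 M1. M0 \<in> F \<and> M1 \<in> F}"

definition is_cov_vector :: "nat \<Rightarrow> (nat \<Rightarrow> complex) \<Rightarrow> bool" where
  "is_cov_vector n a \<longleftrightarrow> (\<exists>M \<in> circ_measures. \<forall>k\<le>n. cov_lag M k = a k)"

definition toeplitz :: "nat \<Rightarrow> (nat \<Rightarrow> complex) \<Rightarrow> complex mat" where
  "toeplitz n c = mat (Suc n) (Suc n) (\<lambda>(k, l). if l \<le> k then c (k - l) else cnj (c (l - k)))"

definition weak_top :: "complex measure topology" where
  "weak_top = topology_generated_by
     {{M \<in> circ_measures. integral\<^sup>L M f \<in> U} | f U.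
        continuous_on (sphere 0 1) (f :: complex \<Rightarrow> real) \<and> open U}"

definition is_metric_on :: "'a set \<Rightarrow> ('a \<Rightarrow> 'a \<Rightarrow> real) \<Rightarrow> bool" where
  "is_metric_on S d \<longleftrightarrow>
     (\<forall>x\<in>S. \<forall>y\<in>S. 0 \<le> d x y \<and> (d x y = 0 \<longleftrightarrow> x = y) \<and> d x y = d y x) \<and>
     (\<forall>x\<in>S. \<forall>y\<in>S. \<forall>z\<in>S. d x z \<le> d x y + d y z)"

definition weakly_continuous :: "(complex measure \<Rightarrow> complex measure \<Rightarrow> real) \<Rightarrow> bool" where
  "weakly_continuous \<delta> \<longleftrightarrow>
     continuous_map (prod_topology weak_top weak_top) euclideanreal (\<lambda>(M, N). \<delta> M N)"

end

theory Submission imports Defs "HOL-Computational_Algebra.Polynomial" begin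

lemma space_circ: "M \<in> circ_measures \<Longrightarrow> space M = sphere 0 1"
proof -
  assume "M \<in> circ_measures"
  then have "sets M = sets (restrict_space borel (sphere (0::complex) 1))" by (simp add: circ_measures_def)
  from sets_eq_imp_space_eq[OF this] show ?thesis by (simp add: space_restrict_space)
qed

lemma fin_circ: "M \<in> circ_measures \<Longrightarrow> finite_measure M"
  by (simp add: circ_measures_def)

lemma meas_circ: "M \<in> circ_measures \<Longrightarrow> continuous_on (sphere 0 1) g \<Longrightarrow> g \<in> borel_measurable M"
proof -
  assume a: "M \<in> circ_measures" "continuous_on (sphere 0 1) g"
  then have "sets M = sets (restrict_space borel (sphere (0::complex) 1))" by (simp add: circ_measures_def)
  then show ?thesis
    by (subst measurable_cong_sets[OF _ refl]) (auto intro: borel_measurable_continuous_on_restrict[OF a(2)])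
qed

lemma int_circ:
  fixes g :: "complex \<Rightarrow> 'b::{banach, second_countable_topology}"
  assumes "M \<in> circ_measures" "continuous_on (sphere 0 1) g"
  shows "integrable M g"
proof -
  have "compact (g ` sphere 0 1)" using compact_continuous_image[OF assms(2)] by simp
  then obtain B where B: "\<And>x. x \<in> sphere 0 1 \<Longrightarrow> norm (g x) \<le> B"
    using compact_imp_bounded bounded_iff by (metis image_eqI)
  interpret finite_measure M using fin_circ[OF assms(1)] .
  show ?thesis
    by (rule integrable_const_bound[where B=B]) (auto simp: space_circ[OF assms(1)] B meas_circ[OF assms])
qed

definition Tent :: "(nat \<Rightarrow> complex) \<Rightarrow> nat \<Rightarrow> nat \<Rightarrow> complex" where
  "Tent a k l = (if l \<le> k then a (k - l) else cnj (a (l - k)))"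

lemma lag_int: "integral\<^sup>L M (\<lambda>z. (cnj z) ^ k) = 2 * pi * cov_lag M k"
  by (simp add: cov_lag_def)

lemma cont_pow: "continuous_on S (\<lambda>z::complex. cnj z ^ k * z ^ l)"
  by (intro continuous_intros)

lemma unit_cnj: "z \<in> sphere 0 1 \<Longrightarrow> cnj z * z = 1"
proof -
  assume "z \<in> sphere 0 1"
  then have "cmod z = 1" by simp
  then show ?thesis using complex_norm_square[of z] by (simp add: mult.commute)
qed

lemma pow_split1: "l \<le> k \<Longrightarrow> cnj z ^ k * z ^ l = cnj z ^ (k - l) * (cnj z * z) ^ l"
proof -
  assume "l \<le> k"
  then obtain d where d: "k = l + d" using le_Suc_ex by blast
  show ?thesis unfolding d power_add power_mult_distrib by simp
qed

lemma pow_split2: "\<not> l \<le> k \<Longrightarrow> cnj z ^ k * z ^ l = z ^ (l - k) * (cnj z * z) ^ k"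
proof -
  assume "\<not> l \<le> k"
  then obtain d where d: "l = k + d" using le_Suc_ex by (metis nat_le_linear)
  show ?thesis unfolding d power_add power_mult_distrib by simp
qed

lemma mono_int:
  assumes "M \<in> circ_measures"
  shows "integral\<^sup>L M (\<lambda>z. cnj z ^ k * z ^ l) = 2 * pi * Tent (cov_lag M) k l"
proof (cases "l \<le> k")
  case True
  have "integral\<^sup>L M (\<lambda>z. cnj z ^ k * z ^ l) = integral\<^sup>L M (\<lambda>z. cnj z ^ (k - l))"
  proof (rule Bochner_Integration.integral_cong[OF refl])
    fix z assume "z \<in> space M"
    then have "cnj z * z = 1" using space_circ[OF assms] unit_cnj by simp
    then show "cnj z ^ k * z ^ l = cnj z ^ (k - l)" using pow_split1[OF True, of z] by simp
  qed
  then show ?thesis using True by (simp add: Tent_def lag_int)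
next
  case False
  have "integral\<^sup>L M (\<lambda>z. cnj z ^ k * z ^ l) = integral\<^sup>L M (\<lambda>z. cnj (cnj z ^ (l - k)))"
  proof (rule Bochner_Integration.integral_cong[OF refl])
    fix z assume "z \<in> space M"
    then have "cnj z * z = 1" using space_circ[OF assms] unit_cnj by simp
    then show "cnj z ^ k * z ^ l = cnj (cnj z ^ (l - k))" using pow_split2[OF False, of z] by simp
  qed
  also have "\<dots> = cnj (integral\<^sup>L M (\<lambda>z. cnj z ^ (l - k)))" by (rule Bochner_Integration.integral_cnj)
  finally show ?thesis using False by (simp add: Tent_def lag_int)
qed


definition Phi :: "nat \<Rightarrow> (nat \<Rightarrow> complex) \<Rightarrow> (nat \<Rightarrow> complex) \<Rightarrow> complex" where
  "Phi n v a = (\<Sum>k\<le>n. \<Sum>l\<le>n. cnj (v k) * v l * Tent a k l)"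

lemma quad_expand: "complex_of_real ((cmod (\<Sum>l\<le>n. v l * z ^ l))^2) =
   (\<Sum>k\<le>n. \<Sum>l\<le>n. cnj (v k) * v l * (cnj z ^ k * z ^ l))"
proof -
  have "complex_of_real ((cmod (\<Sum>l\<le>n. v l * z ^ l))^2) = cnj (\<Sum>l\<le>n. v l * z ^ l) * (\<Sum>l\<le>n. v l * z ^ l)"
    using complex_norm_square by (simp add: mult.commute)
  also have "\<dots> = (\<Sum>k\<le>n. cnj (v k) * cnj z ^ k) * (\<Sum>l\<le>n. v l * z ^ l)"
    by (simp add: cnj_sum)
  also have "\<dots> = (\<Sum>k\<le>n. \<Sum>l\<le>n. cnj (v k) * cnj z ^ k * (v l * z ^ l))"
    by (rule sum_product)
  also have "\<dots> = (\<Sum>k\<le>n. \<Sum>l\<le>n. cnj (v k) * v l * (cnj z ^ k * z ^ l))"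
    by (simp add: algebra_simps)
  finally show ?thesis .
qed

lemma quad_int:
  assumes M: "M \<in> circ_measures"
  shows "complex_of_real (integral\<^sup>L M (\<lambda>z. (cmod (\<Sum>l\<le>n. v l * z ^ l))^2)) = 2 * pi * Phi n v (cov_lag M)"
proof -
  have "complex_of_real (integral\<^sup>L M (\<lambda>z. (cmod (\<Sum>l\<le>n. v l * z ^ l))^2))
      = integral\<^sup>L M (\<lambda>z. complex_of_real ((cmod (\<Sum>l\<le>n. v l * z ^ l))^2))"
    by (rule integral_complex_of_real[symmetric])
  also have "\<dots> = integral\<^sup>L M (\<lambda>z. \<Sum>k\<le>n. \<Sum>l\<le>n. cnj (v k) * v l * (cnj z ^ k * z ^ l))"
    by (simp only: quad_expand)
  also have "\<dots> = (\<Sum>k\<le>n. integral\<^sup>L M (\<lambda>z. \<Sum>l\<le>n. cnj (v k) * v l * (cnj z ^ k * z ^ l)))"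
    by (rule Bochner_Integration.integral_sum) (intro int_circ[OF M] continuous_intros)
  also have "\<dots> = (\<Sum>k\<le>n. \<Sum>l\<le>n. integral\<^sup>L M (\<lambda>z. cnj (v k) * v l * (cnj z ^ k * z ^ l)))"
    by (intro sum.cong refl Bochner_Integration.integral_sum) (intro integrable_mult_right int_circ[OF M] cont_pow)
  also have "\<dots> = (\<Sum>k\<le>n. \<Sum>l\<le>n. cnj (v k) * v l * (2 * pi * Tent (cov_lag M) k l))"
    by (intro sum.cong refl) (simp add: mono_int[OF M])
  also have "\<dots> = 2 * pi * Phi n v (cov_lag M)"
    by (simp add: Phi_def sum_distrib_left algebra_simps)
  finally show ?thesis .
qed

lemma lag_int2: "integral\<^sup>L M (\<lambda>z. z ^ i) = 2 * pi * cnj (cov_lag M i)"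
proof -
  have "integral\<^sup>L M (\<lambda>z. cnj (cnj z ^ i)) = cnj (2 * pi * cov_lag M i)"
    by (simp only: Bochner_Integration.integral_cnj lag_int)
  then show ?thesis by simp
qed

lemma poly_int:
  assumes M: "M \<in> circ_measures"
  shows "integral\<^sup>L M (\<lambda>z. poly q z) = (\<Sum>i\<le>degree q. coeff q i * (2 * pi * cnj (cov_lag M i)))"
proof -
  have "integral\<^sup>L M (\<lambda>z. poly q z) = integral\<^sup>L M (\<lambda>z. \<Sum>i\<le>degree q. coeff q i * cnj (cnj z ^ i))"
    by (simp add: poly_altdef)
  also have "\<dots> = (\<Sum>i\<le>degree q. integral\<^sup>L M (\<lambda>z. coeff q i * cnj (cnj z ^ i)))"
    by (intro Bochner_Integration.integral_sum integrable_mult_right int_circ[OF M] continuous_intros)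
  also have "\<dots> = (\<Sum>i\<le>degree q. coeff q i * (2 * pi * cnj (cov_lag M i)))"
    by (intro sum.cong refl) (simp add: lag_int2)
  finally show ?thesis .
qed

lemma mass_lag:
  assumes M: "M \<in> circ_measures"
  shows "complex_of_real (measure M (space M)) = 2 * pi * cov_lag M 0"
  by (simp add: cov_lag_def scaleR_conv_of_real)


lemma kernel_vec:
  assumes "det (toeplitz n c) = 0"
  shows "\<exists>v. (\<exists>k\<le>n. v k \<noteq> 0) \<and> Phi n v c = 0"
proof -
  have A: "toeplitz n c \<in> carrier_mat (Suc n) (Suc n)" by (simp add: toeplitz_def)
  obtain w where w: "w \<in> carrier_vec (Suc n)" "w \<noteq> 0\<^sub>v (Suc n)" "toeplitz n c *\<^sub>v w = 0\<^sub>v (Suc n)"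
    using det_0_iff_vec_prod_zero[OF A] assms by blast
  define v where "v k = w $ k" for k
  have row: "(\<Sum>l\<le>n. Tent c k l * v l) = 0" if k: "k \<le> n" for k
  proof -
    have "(toeplitz n c *\<^sub>v w) $ k = 0" using w(3) k by simp
    moreover have "(toeplitz n c *\<^sub>v w) $ k = (\<Sum>l<Suc n. Tent c k l * v l)"
      using k w(1) by (simp add: toeplitz_def scalar_prod_def v_def Tent_def atLeast0LessThan)
    ultimately show ?thesis by (simp add: lessThan_Suc_atMost)
  qed
  have "Phi n v c = (\<Sum>k\<le>n. cnj (v k) * (\<Sum>l\<le>n. Tent c k l * v l))"
    unfolding Phi_def by (simp add: sum_distrib_left algebra_simps)
  also have "\<dots> = 0" using row by simp
  finally have P: "Phi n v c = 0" .
  have "\<exists>k\<le>n. v k \<noteq> 0"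
  proof (rule ccontr)
    assume "\<not> ?thesis"
    then have "w = 0\<^sub>v (Suc n)" using w(1) by (intro eq_vecI) (auto simp: v_def less_Suc_eq_le)
    then show False using w(2) by simp
  qed
  then show ?thesis using P by blast
qed


lemma lagrange:
  fixes f :: "complex \<Rightarrow> complex"
  assumes "finite Z"
  shows "\<exists>q. degree q \<le> card Z - 1 \<and> (\<forall>z\<in>Z. poly q z = f z)"
  using assms
proof (induction Z rule: finite_induct)
  case empty
  show ?case by (rule exI[of _ 0]) simp
next
  case (insert a F)
  obtain q' where q': "degree q' \<le> card F - 1" "\<forall>z\<in>F. poly q' z = f z" using insert.IH by blast
  define W where "W = (\<Prod>z\<in>F. [:-z, 1:])"
  have dW: "degree W \<le> card F"
    using degree_prod_sum_le[OF insert.hyps(1), of "\<lambda>z. [:-z, 1:]"] by (simp add: W_def o_def)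
  have pW: "poly W z = (\<Prod>y\<in>F. z - y)" for z by (simp add: W_def poly_prod)
  have W0: "poly W z = 0" if "z \<in> F" for z
    unfolding pW using insert.hyps(1) that by (intro prod_zero) auto
  have Wa: "poly W a \<noteq> 0" unfolding pW using insert.hyps by auto
  define q where "q = q' + Polynomial.smult ((f a - poly q' a) / poly W a) W"
  have "degree q \<le> max (degree q') (degree (Polynomial.smult ((f a - poly q' a) / poly W a) W))"
    unfolding q_def by (rule degree_add_le_max)
  also have "\<dots> \<le> card F" using q'(1) dW Polynomial.degree_smult_le[of "(f a - poly q' a) / poly W a" W] by linarith
  finally have "degree q \<le> card (insert a F) - 1" using insert.hyps by simp
  moreover have "\<forall>z\<in>insert a F. poly q z = f z"
    using q'(2) W0 Wa by (auto simp: q_def)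
  ultimately show ?case by blast
qed

lemma dom_bound:
  fixes g :: "complex \<Rightarrow> complex" and h :: "complex \<Rightarrow> real"
  assumes K: "compact K" and g: "continuous_on K g" and h: "continuous_on K h"
    and hnn: "\<And>z. z \<in> K \<Longrightarrow> 0 \<le> h z" and hz: "\<And>z. z \<in> K \<Longrightarrow> h z = 0 \<Longrightarrow> g z = 0"
    and eta: "\<eta> > 0"
  shows "\<exists>C\<ge>0. \<forall>z\<in>K. cmod (g z) \<le> \<eta> + C * h z"
proof -
  define K' where "K' = K \<inter> (\<lambda>z. cmod (g z)) -` {\<eta>..}"
  have cg: "continuous_on K (\<lambda>z. cmod (g z))" using g by (intro continuous_intros)
  have "closed K'" unfolding K'_def
    by (rule continuous_closed_preimage[OF cg compact_imp_closed[OF K]]) simp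
  then have cK': "compact K'" using K unfolding K'_def
    by (metis Int_absorb1 Int_lower1 compact_Int_closed)
  have "compact (g ` K)" using compact_continuous_image[OF g K] .
  then obtain B where B: "\<And>z. z \<in> K \<Longrightarrow> cmod (g z) \<le> B"
    using compact_imp_bounded bounded_iff by (metis image_eqI)
  show ?thesis
  proof (cases "K' = {}")
    case True
    then have "\<forall>z\<in>K. cmod (g z) \<le> \<eta> + 0 * h z" unfolding K'_def by force
    then show ?thesis by blast
  next
    case False
    have hK': "continuous_on K' h" using h unfolding K'_def by (rule continuous_on_subset) auto
    obtain x0 where x0: "x0 \<in> K'" "\<And>y. y \<in> K' \<Longrightarrow> h x0 \<le> h y"
      using continuous_attains_inf[OF cK' False hK'] by blast
    have x0K: "x0 \<in> K" and gx0: "cmod (g x0) \<ge> \<eta>" using x0(1) unfolding K'_def by auto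
    have "h x0 \<noteq> 0" using hz[OF x0K] gx0 eta by auto
    then have m: "h x0 > 0" using hnn[OF x0K] by simp
    have B0: "B \<ge> 0" using B[OF x0K] norm_ge_zero[of "g x0"] by linarith
    define C where "C = B / h x0"
    have "C \<ge> 0" using B0 m by (simp add: C_def)
    moreover have "cmod (g z) \<le> \<eta> + C * h z" if z: "z \<in> K" for z
    proof (cases "z \<in> K'")
      case True
      have "B = C * h x0" using m by (simp add: C_def)
      also have "\<dots> \<le> C * h z" using x0(2)[OF True] \<open>C \<ge> 0\<close> by (simp add: mult_left_mono)
      finally show ?thesis using B[OF z] eta by linarith
    next
      case False
      then have "cmod (g z) < \<eta>" using z unfolding K'_def by auto
      moreover have "C * h z \<ge> 0" using \<open>C \<ge> 0\<close> hnn[OF z] by simp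
      ultimately show ?thesis by linarith
    qed
    ultimately show ?thesis by blast
  qed
qed


lemma Tent_tendsto:
  assumes "\<And>i. i \<le> n \<Longrightarrow> (\<lambda>j. a j i) \<longlonglongrightarrow> c i" "k \<le> n" "l \<le> n"
  shows "(\<lambda>j. Tent (a j) k l) \<longlonglongrightarrow> Tent c k l"
proof (cases "l \<le> k")
  case True
  then show ?thesis using assms by (simp add: Tent_def)
next
  case False
  then show ?thesis using assms by (simp add: Tent_def tendsto_cnj)
qed

lemma Phi_tendsto:
  assumes "\<And>i. i \<le> n \<Longrightarrow> (\<lambda>j. a j i) \<longlonglongrightarrow> c i"
  shows "(\<lambda>j. Phi n v (a j)) \<longlonglongrightarrow> Phi n v c"
  unfolding Phi_def by (intro tendsto_sum tendsto_mult tendsto_const Tent_tendsto[OF assms]) auto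

lemma est_M:
  fixes f :: "complex \<Rightarrow> real"
  assumes M: "M \<in> circ_measures" and f: "continuous_on (sphere 0 1) f"
    and bnd: "\<And>z. z \<in> sphere 0 1 \<Longrightarrow> cmod (complex_of_real (f z) - poly q z) \<le> \<eta> + C * (cmod (\<Sum>l\<le>n. v l * z ^ l))^2"
  shows "cmod (complex_of_real (integral\<^sup>L M f) - integral\<^sup>L M (poly q))
     \<le> \<eta> * measure M (space M) + C * integral\<^sup>L M (\<lambda>z. (cmod (\<Sum>l\<le>n. v l * z ^ l))^2)"
proof -
  interpret finite_measure M using fin_circ[OF M] .
  have cg: "continuous_on (sphere 0 1) (\<lambda>z. complex_of_real (f z) - poly q z)"
    using f by (intro continuous_intros) auto
  have ch: "continuous_on (sphere 0 1) (\<lambda>z. (cmod (\<Sum>l\<le>n. v l * z ^ l))^2)"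
    by (intro continuous_intros)
  have "complex_of_real (integral\<^sup>L M f) - integral\<^sup>L M (poly q)
      = integral\<^sup>L M (\<lambda>z. complex_of_real (f z) - poly q z)"
    by (subst Bochner_Integration.integral_diff) (auto intro!: int_circ[OF M] f continuous_intros)
  also have "cmod \<dots> \<le> integral\<^sup>L M (\<lambda>z. cmod (complex_of_real (f z) - poly q z))"
    by (rule integral_norm_bound)
  also have "\<dots> \<le> integral\<^sup>L M (\<lambda>z. \<eta> + C * (cmod (\<Sum>l\<le>n. v l * z ^ l))^2)"
    by (rule integral_mono) (auto intro!: int_circ[OF M] cg ch continuous_intros bnd simp: space_circ[OF M])
  also have "\<dots> = \<eta> * measure M (space M) + C * integral\<^sup>L M (\<lambda>z. (cmod (\<Sum>l\<le>n. v l * z ^ l))^2)"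
    by (subst Bochner_Integration.integral_add) (auto intro!: int_circ[OF M] ch continuous_intros)
  finally show ?thesis .
qed


lemma tri3: "cmod (a - b) \<le> cmod (x - y) + cmod (a - x) + cmod (b - y)"
proof -
  have "a - b = ((x - y) + (a - x)) - (b - y)" by simp
  then have "cmod (a - b) \<le> cmod ((x - y) + (a - x)) + cmod (b - y)"
    by (metis norm_triangle_ineq4)
  also have "\<dots> \<le> cmod (x - y) + cmod (a - x) + cmod (b - y)"
    using norm_triangle_ineq[of "x - y" "a - x"] by simp
  finally show ?thesis .
qed

lemma core:
  fixes f :: "complex \<Rightarrow> real"
  assumes mu: "\<mu> \<in> circ_measures" "\<And>k. k \<le> n \<Longrightarrow> cov_lag \<mu> k = c k"
    and vnz: "\<exists>k\<le>n. v k \<noteq> 0" and vP: "Phi n v c = 0"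
    and conv: "\<And>i. i \<le> n \<Longrightarrow> (\<lambda>j. chat j i) \<longlonglongrightarrow> c i"
    and f: "continuous_on (sphere 0 1) f"
    and e: "e > 0"
  shows "eventually (\<lambda>j. \<forall>M \<in> F_set n (chat j). \<bar>integral\<^sup>L M f - integral\<^sup>L \<mu> f\<bar> < e) sequentially"
proof -
  define pp :: "complex poly" where "pp = (\<Sum>l\<le>n. monom (v l) l)"
  have ppz: "poly pp z = (\<Sum>l\<le>n. v l * z ^ l)" for z
    by (simp add: pp_def poly_sum poly_monom)
  have cpp: "coeff pp k = (if k \<le> n then v k else 0)" for k
    by (simp add: pp_def coeff_sum coeff_monom)
  have pp0: "pp \<noteq> 0" using vnz cpp by (metis coeff_0)
  have dpp: "degree pp \<le> n"
  proof (rule ccontr)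
    assume "\<not> degree pp \<le> n"
    then have "coeff pp (degree pp) = 0" using cpp by simp
    then show False using pp0 by simp
  qed
  define Z where "Z = {z \<in> sphere 0 1. poly pp z = 0}"
  have ZR: "Z \<subseteq> {z. poly pp z = 0}" unfolding Z_def by auto
  have fZ: "finite Z" using poly_roots_finite[OF pp0] ZR finite_subset by blast
  have cZ: "card Z \<le> n"
    using card_mono[OF poly_roots_finite[OF pp0] ZR] card_poly_roots_bound[OF pp0] dpp by linarith
  obtain q where q: "degree q \<le> card Z - 1" "\<And>z. z \<in> Z \<Longrightarrow> poly q z = complex_of_real (f z)"
    using lagrange[OF fZ, of "\<lambda>z. complex_of_real (f z)"] by blast
  have dq: "degree q \<le> n" using q(1) cZ by linarith
  define a0 where "a0 = measure \<mu> (space \<mu>)"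
  have a0: "a0 \<ge> 0" by (simp add: a0_def)
  define \<eta> where "\<eta> = e / (4 * (a0 + 1))"
  have eta: "\<eta> > 0" using e a0 by (simp add: \<eta>_def)
  obtain C where C: "C \<ge> 0" "\<forall>z\<in>sphere 0 1. cmod (complex_of_real (f z) - poly q z) \<le> \<eta> + C * (cmod (\<Sum>l\<le>n. v l * z ^ l))^2"
  proof -
    have "\<exists>C\<ge>0. \<forall>z\<in>sphere 0 1. cmod (complex_of_real (f z) - poly q z) \<le> \<eta> + C * (cmod (\<Sum>l\<le>n. v l * z ^ l))^2"
    proof (rule dom_bound[OF compact_sphere _ _ _ _ eta])
      show "continuous_on (sphere 0 1) (\<lambda>z. complex_of_real (f z) - poly q z)"
        using f by (intro continuous_intros) auto
      show "continuous_on (sphere 0 1) (\<lambda>z. (cmod (\<Sum>l\<le>n. v l * z ^ l))^2)"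
        by (intro continuous_intros)
      show "0 \<le> (cmod (\<Sum>l\<le>n. v l * z ^ l))^2" for z by simp
      show "complex_of_real (f z) - poly q z = 0" if "z \<in> sphere 0 1" "(cmod (\<Sum>l\<le>n. v l * z ^ l))^2 = 0" for z
      proof -
        have "z \<in> Z" using that unfolding Z_def by (simp add: ppz)
        then show ?thesis using q(2) by simp
      qed
    qed
    then show ?thesis using that by blast
  qed
  define Q where "Q a = (\<Sum>i\<le>degree q. coeff q i * (2 * pi * cnj (a i)))" for a :: "nat \<Rightarrow> complex"
  define b where "b j = cmod (Q (chat j) - Q c) + \<eta> * (2 * pi * Re (chat j 0) + a0) + C * Re (2 * pi * Phi n v (chat j))" for j
  have "(\<lambda>j. Q (chat j)) \<longlonglongrightarrow> Q c"
    unfolding Q_def using dq by (intro tendsto_intros conv) auto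
  then have t1: "(\<lambda>j. cmod (Q (chat j) - Q c)) \<longlonglongrightarrow> 0"
    using Lim_null tendsto_norm_zero by blast
  have t2: "(\<lambda>j. \<eta> * (2 * pi * Re (chat j 0) + a0)) \<longlonglongrightarrow> \<eta> * (2 * pi * Re (c 0) + a0)"
    by (intro tendsto_intros conv) auto
  have t3: "(\<lambda>j. C * Re (2 * pi * Phi n v (chat j))) \<longlonglongrightarrow> C * Re (2 * pi * Phi n v c)"
    by (intro tendsto_intros Phi_tendsto conv)
  have "(\<lambda>j. b j) \<longlonglongrightarrow> 0 + \<eta> * (2 * pi * Re (c 0) + a0) + C * Re (2 * pi * Phi n v c)"
    unfolding b_def by (intro tendsto_add t1 t2 t3)
  moreover have "complex_of_real a0 = 2 * pi * c 0" using mass_lag[OF mu(1)] mu(2)[of 0] by (simp add: a0_def)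
  then have "a0 = Re (2 * pi * c 0)" by (metis Re_complex_of_real)
  then have "2 * pi * Re (c 0) = a0" by simp
  then have "0 + \<eta> * (2 * pi * Re (c 0) + a0) + C * Re (2 * pi * Phi n v c) = 2 * \<eta> * a0"
    using vP by simp
  ultimately have "(\<lambda>j. b j) \<longlonglongrightarrow> 2 * \<eta> * a0" by simp
  moreover have "2 * \<eta> * a0 < e"
  proof -
    have "2 * \<eta> * a0 = e * (2 * a0) / (4 * (a0 + 1))" by (simp add: \<eta>_def)
    also have "\<dots> < e" using e a0 by (simp add: field_simps add_pos_nonneg)
    finally show ?thesis .
  qed
  ultimately have ev: "eventually (\<lambda>j. b j < e) sequentially"
    by (simp add: order_tendsto_iff)
  show ?thesis
  proof (rule eventually_mono[OF ev], intro ballI)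
    fix j M assume bj: "b j < e" and M: "M \<in> F_set n (chat j)"
    have Mc: "M \<in> circ_measures" and lM: "\<And>k. k \<le> n \<Longrightarrow> cov_lag M k = chat j k"
      using M by (auto simp: F_set_def)
    have e1: "cmod (complex_of_real (integral\<^sup>L M f) - integral\<^sup>L M (poly q))
       \<le> \<eta> * measure M (space M) + C * integral\<^sup>L M (\<lambda>z. (cmod (\<Sum>l\<le>n. v l * z ^ l))^2)"
      by (rule est_M[OF Mc f]) (use C in auto)
    have e2: "cmod (complex_of_real (integral\<^sup>L \<mu> f) - integral\<^sup>L \<mu> (poly q))
       \<le> \<eta> * measure \<mu> (space \<mu>) + C * integral\<^sup>L \<mu> (\<lambda>z. (cmod (\<Sum>l\<le>n. v l * z ^ l))^2)"
      by (rule est_M[OF mu(1) f]) (use C in auto)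
    have qM: "integral\<^sup>L M (poly q) = Q (chat j)"
      using poly_int[OF Mc, of q] dq lM unfolding Q_def by (auto intro!: sum.cong)
    have qmu: "integral\<^sup>L \<mu> (poly q) = Q c"
      using poly_int[OF mu(1), of q] dq mu(2) unfolding Q_def by (auto intro!: sum.cong)
    have hM: "integral\<^sup>L M (\<lambda>z. (cmod (\<Sum>l\<le>n. v l * z ^ l))^2) = Re (2 * pi * Phi n v (chat j))"
    proof -
      have "Phi n v (cov_lag M) = Phi n v (chat j)"
        unfolding Phi_def Tent_def using lM by (intro sum.cong refl) auto
      then show ?thesis using quad_int[OF Mc, where n=n and v=v] by (metis Re_complex_of_real)
    qed
    have hmu: "integral\<^sup>L \<mu> (\<lambda>z. (cmod (\<Sum>l\<le>n. v l * z ^ l))^2) = 0"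
    proof -
      have "Phi n v (cov_lag \<mu>) = Phi n v c"
        unfolding Phi_def Tent_def using mu(2) by (intro sum.cong refl) auto
      then show ?thesis using quad_int[OF mu(1), where n=n and v=v] vP by simp
    qed
    have "measure M (space M) = Re (2 * pi * chat j 0)"
      using mass_lag[OF Mc] lM[of 0] by (metis Re_complex_of_real le0)
    then have mM: "measure M (space M) = 2 * pi * Re (chat j 0)" by simp
    have "\<bar>integral\<^sup>L M f - integral\<^sup>L \<mu> f\<bar>
        = cmod (complex_of_real (integral\<^sup>L M f) - complex_of_real (integral\<^sup>L \<mu> f))"
      by (metis norm_of_real of_real_diff)
    also have "\<dots> \<le> cmod (Q (chat j) - Q c)
        + cmod (complex_of_real (integral\<^sup>L M f) - integral\<^sup>L M (poly q))
        + cmod (complex_of_real (integral\<^sup>L \<mu> f) - integral\<^sup>L \<mu> (poly q))"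
      unfolding qM[symmetric] qmu[symmetric] by (rule tri3)
    also have "\<dots> \<le> b j" using e1 e2 unfolding b_def hM hmu mM a0_def by (simp add: algebra_simps)
    finally show "\<bar>integral\<^sup>L M f - integral\<^sup>L \<mu> f\<bar> < e" using bj by linarith
  qed
qed


lemma nbhd_aux:
  assumes "generate_topology_on {{M \<in> circ_measures. integral\<^sup>L M f \<in> U} | f U.
        continuous_on (sphere 0 1) (f :: complex \<Rightarrow> real) \<and> open U} Ob"
  shows "\<forall>\<mu>\<in>Ob. \<exists>(S::(complex \<Rightarrow> real) set) (e::real). finite S \<and> e > 0 \<and> (\<forall>f\<in>S. continuous_on (sphere 0 1) f) \<and>
     {M \<in> circ_measures. \<forall>f\<in>S. \<bar>integral\<^sup>L M f - integral\<^sup>L \<mu> f\<bar> < e} \<subseteq> Ob"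
  using assms
proof (induction rule: generate_topology_on.induct)
  case Empty
  then show ?case by simp
next
  case (Int a b)
  show ?case
  proof
    fix \<mu> assume "\<mu> \<in> a \<inter> b"
    then have ma: "\<mu> \<in> a" and mb: "\<mu> \<in> b" by simp_all
    obtain S1 e1 where
      1: "finite (S1 :: (complex \<Rightarrow> real) set)" "(e1::real) > 0" "\<forall>f\<in>S1. continuous_on (sphere 0 1) f"
         "{M \<in> circ_measures. \<forall>f\<in>S1. \<bar>integral\<^sup>L M f - integral\<^sup>L \<mu> f\<bar> < e1} \<subseteq> a"
      using bspec[OF Int.IH(1) ma] by blast
    obtain S2 e2 where
      2: "finite (S2 :: (complex \<Rightarrow> real) set)" "(e2::real) > 0" "\<forall>f\<in>S2. continuous_on (sphere 0 1) f"
         "{M \<in> circ_measures. \<forall>f\<in>S2. \<bar>integral\<^sup>L M f - integral\<^sup>L \<mu> f\<bar> < e2} \<subseteq> b"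
      using bspec[OF Int.IH(2) mb] by blast
    show "\<exists>(S::(complex \<Rightarrow> real) set) (e::real). finite S \<and> e > 0 \<and> (\<forall>f\<in>S. continuous_on (sphere 0 1) f) \<and>
     {M \<in> circ_measures. \<forall>f\<in>S. \<bar>integral\<^sup>L M f - integral\<^sup>L \<mu> f\<bar> < e} \<subseteq> a \<inter> b"
    proof (intro exI conjI)
      show "finite (S1 \<union> S2)" using 1 2 by simp
      show "min e1 e2 > 0" using 1 2 by simp
      show "\<forall>f\<in>S1 \<union> S2. continuous_on (sphere 0 1) f" using 1 2 by blast
      show "{M \<in> circ_measures. \<forall>f\<in>S1 \<union> S2. \<bar>integral\<^sup>L M f - integral\<^sup>L \<mu> f\<bar> < min e1 e2} \<subseteq> a \<inter> b"
      proof (rule subsetI)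
        fix M assume "M \<in> {M \<in> circ_measures. \<forall>f\<in>S1 \<union> S2. \<bar>integral\<^sup>L M f - integral\<^sup>L \<mu> f\<bar> < min e1 e2}"
        then have Mc: "M \<in> circ_measures" and h: "\<And>f. f \<in> S1 \<union> S2 \<Longrightarrow> \<bar>integral\<^sup>L M f - integral\<^sup>L \<mu> f\<bar> < min e1 e2"
          by simp_all
        have "\<forall>f\<in>S1. \<bar>integral\<^sup>L M f - integral\<^sup>L \<mu> f\<bar> < e1"
        proof
          fix f assume "f \<in> S1"
          then have "\<bar>integral\<^sup>L M f - integral\<^sup>L \<mu> f\<bar> < min e1 e2" using h by blast
          then show "\<bar>integral\<^sup>L M f - integral\<^sup>L \<mu> f\<bar> < e1" by linarith
        qed
        then have "M \<in> a" using 1(4) Mc by blast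
        have "\<forall>f\<in>S2. \<bar>integral\<^sup>L M f - integral\<^sup>L \<mu> f\<bar> < e2"
        proof
          fix f assume "f \<in> S2"
          then have "\<bar>integral\<^sup>L M f - integral\<^sup>L \<mu> f\<bar> < min e1 e2" using h by blast
          then show "\<bar>integral\<^sup>L M f - integral\<^sup>L \<mu> f\<bar> < e2" by linarith
        qed
        then have "M \<in> b" using 2(4) Mc by blast
        with \<open>M \<in> a\<close> show "M \<in> a \<inter> b" by simp
      qed
    qed
  qed
next
  case (UN K)
  show ?case
  proof
    fix \<mu> assume "\<mu> \<in> \<Union>K"
    then obtain k where k: "k \<in> K" "\<mu> \<in> k" by blast
    obtain S e where 1: "finite (S :: (complex \<Rightarrow> real) set)" "(e::real) > 0" "\<forall>f\<in>S. continuous_on (sphere 0 1) f"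
         "{M \<in> circ_measures. \<forall>f\<in>S. \<bar>integral\<^sup>L M f - integral\<^sup>L \<mu> f\<bar> < e} \<subseteq> k"
      using bspec[OF UN.IH[OF k(1)] k(2)] by blast
    have "{M \<in> circ_measures. \<forall>f\<in>S. \<bar>integral\<^sup>L M f - integral\<^sup>L \<mu> f\<bar> < e} \<subseteq> \<Union>K"
      using 1(4) k(1) by blast
    then show "\<exists>(S::(complex \<Rightarrow> real) set) (e::real). finite S \<and> e > 0 \<and> (\<forall>f\<in>S. continuous_on (sphere 0 1) f) \<and>
     {M \<in> circ_measures. \<forall>f\<in>S. \<bar>integral\<^sup>L M f - integral\<^sup>L \<mu> f\<bar> < e} \<subseteq> \<Union>K"
      using 1(1-3) by blast
  qed
next
  case (Basis s)
  then obtain f U where s: "s = {M \<in> circ_measures. integral\<^sup>L M f \<in> U}"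
    "continuous_on (sphere 0 1) (f :: complex \<Rightarrow> real)" "open U" by blast
  show ?case
  proof
    fix \<mu> assume "\<mu> \<in> s"
    then have "integral\<^sup>L \<mu> f \<in> U" using s by simp
    then obtain e where e: "e > 0" "ball (integral\<^sup>L \<mu> f) e \<subseteq> U" using s(3) openE by blast
    show "\<exists>(S::(complex \<Rightarrow> real) set) (e::real). finite S \<and> e > 0 \<and> (\<forall>f\<in>S. continuous_on (sphere 0 1) f) \<and>
     {M \<in> circ_measures. \<forall>f\<in>S. \<bar>integral\<^sup>L M f - integral\<^sup>L \<mu> f\<bar> < e} \<subseteq> s"
    proof (intro exI conjI)
      show "finite {f}" by simp
      show "\<forall>g\<in>{f}. continuous_on (sphere 0 1) g" using s(2) by simp
      show "{M \<in> circ_measures. \<forall>g\<in>{f}. \<bar>integral\<^sup>L M g - integral\<^sup>L \<mu> g\<bar> < e} \<subseteq> s"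
      proof (rule subsetI)
        fix M assume "M \<in> {M \<in> circ_measures. \<forall>g\<in>{f}. \<bar>integral\<^sup>L M g - integral\<^sup>L \<mu> g\<bar> < e}"
        then have Mc: "M \<in> circ_measures" and h: "\<bar>integral\<^sup>L M f - integral\<^sup>L \<mu> f\<bar> < e" by auto
        have "integral\<^sup>L M f \<in> ball (integral\<^sup>L \<mu> f) e" using h by (simp add: dist_real_def abs_minus_commute)
        then show "M \<in> s" using e(2) Mc unfolding s(1) by blast
      qed
    qed (rule e(1))
  qed
qed

lemma nbhd:
  assumes "openin weak_top Ob" "\<mu> \<in> Ob"
  shows "\<exists>(S::(complex \<Rightarrow> real) set) (e::real). finite S \<and> e > 0 \<and> (\<forall>f\<in>S. continuous_on (sphere 0 1) f) \<and>
     {M \<in> circ_measures. \<forall>f\<in>S. \<bar>integral\<^sup>L M f - integral\<^sup>L \<mu> f\<bar> < e} \<subseteq> Ob"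
  using nbhd_aux[of Ob] assms unfolding weak_top_def openin_topology_generated_by_iff by blast


lemma topspace_weak: "topspace weak_top = circ_measures"
proof -
  have "circ_measures \<in> {{M \<in> circ_measures. integral\<^sup>L M f \<in> U} | f U.
        continuous_on (sphere 0 1) (f :: complex \<Rightarrow> real) \<and> open U}"
    by (rule CollectI, rule exI[of _ "\<lambda>_. 0"], rule exI[of _ UNIV]) auto
  then show ?thesis unfolding weak_top_def topology_generated_by_topspace by blast
qed

theorem corollary3:
  fixes n :: nat and c :: "nat \<Rightarrow> complex" and chat :: "nat \<Rightarrow> nat \<Rightarrow> complex"
    and \<delta> :: "complex measure \<Rightarrow> complex measure \<Rightarrow> real"
  assumes "is_cov_vector n c"
    and "det (toeplitz n c) = 0"
    and "\<And>j. is_cov_vector n (chat j)"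
    and "\<And>i. i \<le> n \<Longrightarrow> (\<lambda>j. chat j i) \<longlonglongrightarrow> c i"
    and "is_metric_on circ_measures \<delta>"
    and "weakly_continuous \<delta>"
  shows "(\<lambda>j. diam_delta \<delta> (F_set n (chat j))) \<longlonglongrightarrow> 0"
proof -
  obtain \<mu> where mu: "\<mu> \<in> circ_measures" "\<And>k. k \<le> n \<Longrightarrow> cov_lag \<mu> k = c k"
    using assms(1) unfolding is_cov_vector_def by blast
  obtain v where v: "\<exists>k\<le>n. v k \<noteq> 0" "Phi n v c = 0" using kernel_vec[OF assms(2)] by blast
  have dd: "\<delta> x x = 0" if "x \<in> circ_measures" for x
    using assms(5) that unfolding is_metric_on_def by blast
  have cont: "continuous_map (prod_topology weak_top weak_top) euclideanreal (\<lambda>(M, N). \<delta> M N)"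
    using assms(6) unfolding weakly_continuous_def .
  show ?thesis unfolding tendsto_iff
  proof (intro allI impI)
    fix \<epsilon> :: real assume eps: "\<epsilon> > 0"
    define W where "W = {x \<in> topspace (prod_topology weak_top weak_top). (\<lambda>(M, N). \<delta> M N) x \<in> {-\<epsilon>/2<..<\<epsilon>/2}}"
    have oI: "openin euclideanreal {-\<epsilon>/2<..<\<epsilon>/2}" by (metis open_openin open_greaterThanLessThan)
    have oW: "openin (prod_topology weak_top weak_top) W"
      unfolding W_def by (rule openin_continuous_map_preimage[OF cont oI])
    have muW: "(\<mu>, \<mu>) \<in> W" unfolding W_def using mu(1) dd[OF mu(1)] eps by (simp add: topspace_weak)
    then obtain U V where UV: "openin weak_top U" "openin weak_top V" "\<mu> \<in> U" "\<mu> \<in> V" "U \<times> V \<subseteq> W"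
      using oW[unfolded openin_prod_topology_alt, rule_format, OF muW] by blast
    have "openin weak_top (U \<inter> V)" using UV by (simp add: openin_Int)
    then obtain S e where Se: "finite (S :: (complex \<Rightarrow> real) set)" "(e::real) > 0" "\<forall>f\<in>S. continuous_on (sphere 0 1) f"
         "{M \<in> circ_measures. \<forall>f\<in>S. \<bar>integral\<^sup>L M f - integral\<^sup>L \<mu> f\<bar> < e} \<subseteq> U \<inter> V"
      using nbhd[of "U \<inter> V" \<mu>] UV(3,4) by blast
    have "\<forall>f\<in>S. eventually (\<lambda>j. \<forall>M \<in> F_set n (chat j). \<bar>integral\<^sup>L M f - integral\<^sup>L \<mu> f\<bar> < e) sequentially"
    proof
      fix f assume "f \<in> S"
      then show "eventually (\<lambda>j. \<forall>M \<in> F_set n (chat j). \<bar>integral\<^sup>L M f - integral\<^sup>L \<mu> f\<bar> < e) sequentially"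
        using core[OF mu v(1) v(2) assms(4) _ Se(2)] Se(3) by blast
    qed
    from eventually_ball_finite[OF Se(1) this]
    have ev: "eventually (\<lambda>j. \<forall>f\<in>S. \<forall>M \<in> F_set n (chat j). \<bar>integral\<^sup>L M f - integral\<^sup>L \<mu> f\<bar> < e) sequentially" .
    show "eventually (\<lambda>j. dist (diam_delta \<delta> (F_set n (chat j))) 0 < \<epsilon>) sequentially"
    proof (rule eventually_mono[OF ev])
      fix j assume H: "\<forall>f\<in>S. \<forall>M \<in> F_set n (chat j). \<bar>integral\<^sup>L M f - integral\<^sup>L \<mu> f\<bar> < e"
      define F where "F = F_set n (chat j)"
      have sub: "M \<in> U \<inter> V" if "M \<in> F" for M
      proof -
        have "M \<in> circ_measures" using that unfolding F_def F_set_def by blast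
        moreover have "\<forall>f\<in>S. \<bar>integral\<^sup>L M f - integral\<^sup>L \<mu> f\<bar> < e" using H that unfolding F_def by blast
        ultimately show ?thesis using Se(4) by blast
      qed
      have bnd: "\<delta> M N < \<epsilon> / 2" if "M \<in> F" "N \<in> F" for M N
      proof -
        have "(M, N) \<in> W" using UV(5) sub[OF that(1)] sub[OF that(2)] by blast
        then show ?thesis unfolding W_def by simp
      qed
      obtain M0 where M0: "M0 \<in> F"
        using assms(3)[of j] unfolding is_cov_vector_def F_def F_set_def by blast
      have M0c: "M0 \<in> circ_measures" using M0 unfolding F_def F_set_def by blast
      define A where "A = {\<delta> M0 M1 | M0 M1. M0 \<in> F \<and> M1 \<in> F}"
      have Ane: "A \<noteq> {}" using M0 unfolding A_def by blast
      have Ab: "\<forall>x\<in>A. x \<le> \<epsilon> / 2" using bnd unfolding A_def by fastforce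
      have "Sup A \<le> \<epsilon> / 2" using Ane Ab by (intro cSup_least) auto
      moreover have "\<delta> M0 M0 \<le> Sup A"
      proof (rule cSup_upper)
        show "\<delta> M0 M0 \<in> A" using M0 unfolding A_def by blast
        show "bdd_above A" using Ab by (intro bdd_aboveI[of _ "\<epsilon> / 2"]) blast
      qed
      then have "0 \<le> Sup A" using dd[OF M0c] by simp
      ultimately have "dist (Sup A) 0 < \<epsilon>" using eps by (simp add: dist_real_def)
      then show "dist (diam_delta \<delta> (F_set n (chat j))) 0 < \<epsilon>"
        unfolding diam_delta_def A_def F_def .
    qed
  qed
qed

end
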